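(* With probability at least $1-\delta$ over the random initialization, $\|\mathbf{w}_r(t)-\mathbf{w}_r(0)\|_2=\mathcal{O}\!\left(\frac{n}{\sqrt{\delta m}\,\lambda}\right)$ for all $t\ge0$ and all $r\in[m]$.
   Context: Training data $\{(\mathbf{x}_i,y_i)\}_{i=1}^n$ with $\|\mathbf{x}_i\|_2=1$, $|y_i|\le1$. The network is $f_{nn}(\mathbf{x};\mathbf{W})=\frac{1}{\sqrt m}\sum_{r=1}^m a_r\sigma(\mathbf{w}_r^\top\mathbf{x})$, $\sigma(z)=\max(z,0)$, $\mathbf{W}=[\mathbf{w}_1,\dots,\mathbf{w}_m]$, initialized with $\mathbf{w}_r(0)\sim\mathcal{N}(\mathbf{0},\kappa^2\mathbf{I}_d)$, $a_r\sim\mathrm{unif}(\{-1,1\})$, all independent, $0<\kappa$. The vector $\mathbf{a}$ is fixed and $\mathbf{W}(t)$ evolves by the gradient flow $\frac{d\mathbf{W}(t)}{dt}=-\frac{\partial\mathcal{L}(\mathbf{W}(t))}{\partial\mathbf{W}(t)}$ on $\mathcal{L}(\mathbf{W})=\frac12\sum_{i=1}^n(f_{nn}(\mathbf{x}_i;\mathbf{W})-y_i)^2+\frac\lambda2\|\mathbf{W}-\mathbf{W}(0)\|_F^2$, $\lambda>0$, using $\sigma'(z)=\mathbb{I}\{z\ge0\}$. *)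

theory Defs
  imports "HOL-Probability.Probability"
begin

text \<open>Vectors in R^d are represented as functions nat => real; only coordinates j < d matter.
  The weight matrix W is a function r => (j => real); only r < m matters.\<close>

definition inner_d :: "nat \<Rightarrow> (nat \<Rightarrow> real) \<Rightarrow> (nat \<Rightarrow> real) \<Rightarrow> real" where
  "inner_d d u v = (\<Sum>j<d. u j * v j)"

definition norm_d :: "nat \<Rightarrow> (nat \<Rightarrow> real) \<Rightarrow> real" where
  "norm_d d u = sqrt (\<Sum>j<d. (u j)\<^sup>2)"

definition relu :: "real \<Rightarrow> real" where
  "relu z = max z 0"

definition relu' :: "real \<Rightarrow> real" where
  "relu' z = (if z \<ge> 0 then 1 else 0)"

definition f_nn :: "nat \<Rightarrow> nat \<Rightarrow> (nat \<Rightarrow> real) \<Rightarrow> (nat \<Rightarrow> nat \<Rightarrow> real) \<Rightarrow> (nat \<Rightarrow> real) \<Rightarrow> real" where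
  "f_nn m d a W xv = (1 / sqrt (real m)) * (\<Sum>r<m. a r * relu (inner_d d (W r) xv))"

definition loss :: "nat \<Rightarrow> nat \<Rightarrow> nat \<Rightarrow> (nat \<Rightarrow> nat \<Rightarrow> real) \<Rightarrow> (nat \<Rightarrow> real) \<Rightarrow> (nat \<Rightarrow> real)
    \<Rightarrow> real \<Rightarrow> (nat \<Rightarrow> nat \<Rightarrow> real) \<Rightarrow> (nat \<Rightarrow> nat \<Rightarrow> real) \<Rightarrow> real" where
  "loss n m d x y a lam W0 W =
     (1/2) * (\<Sum>i<n. (f_nn m d a W (x i) - y i)\<^sup>2)
     + (lam/2) * (\<Sum>r<m. \<Sum>j<d. (W r j - W0 r j)\<^sup>2)"

definition grad_L :: "nat \<Rightarrow> nat \<Rightarrow> nat \<Rightarrow> (nat \<Rightarrow> nat \<Rightarrow> real) \<Rightarrow> (nat \<Rightarrow> real) \<Rightarrow> (nat \<Rightarrow> real)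
    \<Rightarrow> real \<Rightarrow> (nat \<Rightarrow> nat \<Rightarrow> real) \<Rightarrow> (nat \<Rightarrow> nat \<Rightarrow> real) \<Rightarrow> nat \<Rightarrow> nat \<Rightarrow> real" where
  "grad_L n m d x y a lam W0 W r j =
     (\<Sum>i<n. (f_nn m d a W (x i) - y i) * (1 / sqrt (real m)) * a r
              * relu' (inner_d d (W r) (x i)) * x i j)
     + lam * (W r j - W0 r j)"

definition grad_flow :: "nat \<Rightarrow> nat \<Rightarrow> nat \<Rightarrow> (nat \<Rightarrow> nat \<Rightarrow> real) \<Rightarrow> (nat \<Rightarrow> real) \<Rightarrow> (nat \<Rightarrow> real)
    \<Rightarrow> real \<Rightarrow> (nat \<Rightarrow> nat \<Rightarrow> real) \<Rightarrow> (real \<Rightarrow> nat \<Rightarrow> nat \<Rightarrow> real) \<Rightarrow> bool" where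
  "grad_flow n m d x y a lam W0 W \<longleftrightarrow>
     (\<forall>r<m. \<forall>j<d. W 0 r j = W0 r j) \<and>
     (\<forall>t\<ge>0. \<forall>r<m. \<forall>j<d.
        ((\<lambda>s. W s r j) has_real_derivative (- grad_L n m d x y a lam W0 (W t) r j)) (at t within {0..}))"

text \<open>Initialization: w_r(0) ~ N(0, kappa^2 I_d) (i.i.d. coordinates), a_r ~ unif{-1,1}, all independent.
  An outcome is a pair (w0, a).\<close>
definition init_measure :: "nat \<Rightarrow> nat \<Rightarrow> real \<Rightarrow> ((nat \<Rightarrow> nat \<Rightarrow> real) \<times> (nat \<Rightarrow> real)) measure" where
  "init_measure d m \<kappa> =
     (PiM {..<m} (\<lambda>_. PiM {..<d} (\<lambda>_. density lborel (normal_density 0 \<kappa>))))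
     \<Otimes>\<^sub>M (PiM {..<m} (\<lambda>_. measure_pmf (pmf_of_set {-1, 1::real})))"

end

theory Submission
  imports Defs
begin


lemma deriv_nonpos_countable:
  fixes f :: "real \<Rightarrow> real"
  assumes ab: "a \<le> b" and cont: "continuous_on {a..b} f" and S: "countable S"
    and der: "\<And>t. t \<in> {a<..<b} - S \<Longrightarrow> \<exists>D. (f has_real_derivative D) (at t) \<and> D \<le> 0"
  shows "f b \<le> f a"
proof (rule ccontr)
  assume "\<not> f b \<le> f a"
  hence fab: "f a < f b" by simp
  have "a \<noteq> b" using fab by auto
  hence altb: "a < b" using ab by simp
  define \<eta> where "\<eta> = (f b - f a) / (2 * (b - a))"
  have eta: "\<eta> > 0" using fab altb by (simp add: \<eta>_def)
  define g where "g t = f t - \<eta> * (t - a)" for t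
  have gcont: "continuous_on {a..b} g" unfolding g_def
    by (intro continuous_intros cont)
  have "g b - g a = (f b - f a) / 2" using altb by (simp add: g_def \<eta>_def field_simps)
  hence gab: "g a < g b" using fab by simp
  define Z where "Z y = {t \<in> {a..b}. g t = y}" for y
  define \<tau> where "\<tau> y = Sup (Z y)" for y
  have key: "\<tau> y \<in> {a<..<b} \<and> g (\<tau> y) = y \<and> (\<forall>s. \<tau> y < s \<and> s \<le> b \<longrightarrow> g s > y)"
    if y: "y \<in> {g a<..<g b}" for y
  proof -
    obtain t0 where t0: "a \<le> t0" "t0 \<le> b" "g t0 = y"
      using IVT'[of g a y b] y gcont ab by auto
    have ne: "Z y \<noteq> {}" using t0 by (auto simp: Z_def)
    have bdd: "bdd_above (Z y)" by (auto simp: Z_def bdd_above_def)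
    have cl: "closed (Z y)"
      unfolding Z_def by (rule continuous_closed_preimage_constant[OF gcont]) simp
    have tin: "\<tau> y \<in> Z y" unfolding \<tau>_def using closed_contains_Sup[OF ne bdd cl] .
    hence t1: "a \<le> \<tau> y" "\<tau> y \<le> b" "g (\<tau> y) = y" by (auto simp: Z_def)
    have after: "g s > y" if s: "\<tau> y < s" "s \<le> b" for s
    proof (rule ccontr)
      assume "\<not> g s > y"
      hence "g s \<le> y" by simp
      moreover have "y \<le> g b" using y by simp
      moreover have "continuous_on {s..b} g" using t1 s
        by (intro continuous_on_subset[OF gcont]) auto
      ultimately obtain t' where t': "s \<le> t'" "t' \<le> b" "g t' = y"
        using IVT'[of g s y b] s by auto
      hence "t' \<in> Z y" using t1 s by (auto simp: Z_def)
      hence "t' \<le> \<tau> y" unfolding \<tau>_def using bdd by (simp add: cSup_upper)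
      thus False using t' s by simp
    qed
    have "\<tau> y \<noteq> a" using t1 y by auto
    moreover have "\<tau> y \<noteq> b" using t1 y by auto
    ultimately show ?thesis using t1 after by auto
  qed
  have inj: "inj_on \<tau> {g a<..<g b}"
    by (rule inj_onI) (metis key)
  have "\<not> (\<tau> ` {g a<..<g b} \<subseteq> S)"
  proof
    assume "\<tau> ` {g a<..<g b} \<subseteq> S"
    hence "countable (\<tau> ` {g a<..<g b})" using S countable_subset by blast
    hence "countable {g a<..<g b}" using countable_image_inj_on inj by blast
    thus False using uncountable_open_interval gab by blast
  qed
  then obtain y where y: "y \<in> {g a<..<g b}" and tS: "\<tau> y \<notin> S" by blast
  define t where "t = \<tau> y"
  have tk: "t \<in> {a<..<b}" "g t = y" "\<And>s. t < s \<Longrightarrow> s \<le> b \<Longrightarrow> g s > y"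
    using key[OF y] by (auto simp: t_def)
  obtain D where D: "(f has_real_derivative D) (at t)" "D \<le> 0"
    using der[of t] tk tS by (auto simp: t_def)
  have gD: "(g has_real_derivative (D - \<eta>)) (at t)"
    unfolding g_def by (auto intro!: derivative_eq_intros D(1))
  hence "((\<lambda>s. (g s - g t) / (s - t)) \<longlongrightarrow> D - \<eta>) (at t)"
    by (simp add: has_field_derivative_iff)
  hence "((\<lambda>s. (g s - g t) / (s - t)) \<longlongrightarrow> D - \<eta>) (at_right t)"
    by (rule filterlim_mono) (auto simp: at_le)
  moreover have "D - \<eta> < 0" using D eta by simp
  ultimately have ev1: "eventually (\<lambda>s. (g s - g t) / (s - t) < 0) (at_right t)"
    by (simp add: order_tendstoD(2))
  have ev2: "eventually (\<lambda>s. t < s \<and> s < b) (at_right t)"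
    using tk(1) by (auto simp: eventually_at_right_field intro!: exI[of _ b])
  have "eventually (\<lambda>s. False) (at_right t)"
    using ev1 ev2
  proof eventually_elim
    case (elim s)
    hence "g s > g t" using tk by auto
    hence "(g s - g t) / (s - t) > 0" using elim by simp
    thus False using elim by simp
  qed
  thus False by simp
qed



lemma relu_chain:
  assumes z: "(z has_real_derivative c) (at t)" and nz: "z t \<noteq> 0 \<or> c = 0"
  shows "((\<lambda>s. relu (z s)) has_real_derivative relu' (z t) * c) (at t)"
proof -
  have lim: "(z \<longlongrightarrow> z t) (at t)" using DERIV_isCont[OF z] by (simp add: isCont_def)
  consider "z t > 0" | "z t < 0" | "z t = 0" "c = 0" using nz by linarith
  then show ?thesis
  proof cases
    case 1
    have "eventually (\<lambda>s. z s > 0) (at t)" using order_tendstoD(1)[OF lim 1] .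
    hence ev: "eventually (\<lambda>s. relu (z s) = z s) (nhds t)"
      using 1 by (auto simp: eventually_nhds_conv_at relu_def elim!: eventually_mono)
    have "(z has_real_derivative relu' (z t) * c) (at t)" using z 1 by (simp add: relu'_def)
    moreover have "((\<lambda>s. relu (z s)) has_real_derivative relu' (z t) * c) (at t) \<longleftrightarrow> (z has_real_derivative relu' (z t) * c) (at t)"
      by (rule DERIV_cong_ev[OF refl ev refl])
    ultimately show ?thesis by simp
  next
    case 2
    have "eventually (\<lambda>s. z s < 0) (at t)" using order_tendstoD(2)[OF lim 2] .
    hence ev: "eventually (\<lambda>s. relu (z s) = 0) (nhds t)"
      using 2 by (auto simp: eventually_nhds_conv_at relu_def elim!: eventually_mono)
    have "((\<lambda>s. 0) has_real_derivative relu' (z t) * c) (at t)" using 2 by (simp add: relu'_def)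
    moreover have "((\<lambda>s. relu (z s)) has_real_derivative relu' (z t) * c) (at t) \<longleftrightarrow> ((\<lambda>s. 0) has_real_derivative relu' (z t) * c) (at t)"
      by (rule DERIV_cong_ev[OF refl ev refl])
    ultimately show ?thesis by simp
  next
    case 3
    have q: "((\<lambda>s. (z s - z t) / (s - t)) \<longlongrightarrow> 0) (at t)"
      using z 3 by (simp add: has_field_derivative_iff)
    have "((\<lambda>s. (relu (z s) - relu (z t)) / (s - t)) \<longlongrightarrow> 0) (at t)"
    proof (rule Lim_null_comparison)
      show "eventually (\<lambda>s. norm ((relu (z s) - relu (z t)) / (s - t)) \<le> \<bar>(z s - z t) / (s - t)\<bar>) (at t)"
        using 3 by (auto simp: relu_def abs_div intro!: always_eventually divide_right_mono)
      show "((\<lambda>s. \<bar>(z s - z t) / (s - t)\<bar>) \<longlongrightarrow> 0) (at t)"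
        using tendsto_rabs[OF q] by simp
    qed
    thus ?thesis using 3 by (simp add: has_field_derivative_iff)
  qed
qed

lemma countable_isolated_real:
  fixes X :: "real set"
  assumes iso: "\<And>x. x \<in> X \<Longrightarrow> \<exists>e>0. \<forall>y\<in>X. y \<noteq> x \<longrightarrow> e \<le> \<bar>y - x\<bar>"
  shows "countable X"
proof -
  define e where "e x = (SOME e. e > 0 \<and> (\<forall>y\<in>X. y \<noteq> x \<longrightarrow> e \<le> \<bar>y - x\<bar>))" for x
  have e: "e x > 0 \<and> (\<forall>y\<in>X. y \<noteq> x \<longrightarrow> e x \<le> \<bar>y - x\<bar>)" if "x \<in> X" for x
    unfolding e_def using someI_ex[OF iso[OF that]] .
  define q where "q x = (SOME q. q \<in> \<rat> \<and> x < q \<and> q < x + e x / 2)" for x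
  have q: "q x \<in> \<rat> \<and> x < q x \<and> q x < x + e x / 2" if "x \<in> X" for x
  proof -
    have "x < x + e x / 2" using e[OF that] by simp
    then obtain r where "r \<in> \<rat>" "x < r" "r < x + e x / 2" using Rats_dense_in_real by blast
    hence "r \<in> \<rat> \<and> x < r \<and> r < x + e x / 2" by simp
    thus ?thesis unfolding q_def by (rule someI)
  qed
  have inj: "inj_on q X"
  proof (rule inj_onI, rule ccontr)
    fix x y assume xy: "x \<in> X" "y \<in> X" "q x = q y" "x \<noteq> y"
    have "e x \<le> \<bar>y - x\<bar>" "e y \<le> \<bar>x - y\<bar>" using e xy by auto
    thus False using q[OF xy(1)] q[OF xy(2)] xy(3) by auto
  qed
  have "q ` X \<subseteq> \<rat>" using q by auto
  hence "countable (q ` X)" using countable_rat countable_subset by blast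
  thus ?thesis using countable_image_inj_on inj by blast
qed

lemma isolated_zero:
  assumes z: "(z has_real_derivative c) (at t)" and c: "c \<noteq> 0"
  shows "\<exists>e>0. \<forall>s. s \<noteq> t \<and> \<bar>s - t\<bar> < e \<longrightarrow> z s \<noteq> z t"
proof -
  have q: "((\<lambda>s. (z s - z t) / (s - t)) \<longlongrightarrow> c) (at t)"
    using z by (simp add: has_field_derivative_iff)
  have "eventually (\<lambda>s. (z s - z t) / (s - t) \<noteq> 0) (at t)"
    using tendsto_imp_eventually_ne[OF q c] .
  then obtain e where "e > 0" "\<forall>s. s \<noteq> t \<and> dist s t < e \<longrightarrow> (z s - z t) / (s - t) \<noteq> 0"
    by (auto simp: eventually_at)
  thus ?thesis by (auto simp: dist_real_def)
qed



lemma swap_lemma: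
  fixes e :: "nat \<Rightarrow> real" and c :: real
  shows "(\<Sum>i<n. e i * (c * (\<Sum>r<m. a r * (\<rho> r i * (\<Sum>j<d. V r j * x i j))))) =
         (\<Sum>r<m. \<Sum>j<d. V r j * (\<Sum>i<n. e i * c * a r * \<rho> r i * x i j))"
proof -
  have "(\<Sum>i<n. e i * (c * (\<Sum>r<m. a r * (\<rho> r i * (\<Sum>j<d. V r j * x i j))))) =
        (\<Sum>i<n. \<Sum>r<m. \<Sum>j<d. V r j * (e i * c * a r * \<rho> r i * x i j))"
    by (simp add: sum_distrib_left mult_ac)
  also have "\<dots> = (\<Sum>r<m. \<Sum>i<n. \<Sum>j<d. V r j * (e i * c * a r * \<rho> r i * x i j))"
    by (rule sum.swap)
  also have "\<dots> = (\<Sum>r<m. \<Sum>j<d. \<Sum>i<n. V r j * (e i * c * a r * \<rho> r i * x i j))"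
    by (intro sum.cong refl sum.swap)
  also have "\<dots> = (\<Sum>r<m. \<Sum>j<d. V r j * (\<Sum>i<n. e i * c * a r * \<rho> r i * x i j))"
    by (simp add: sum_distrib_left)
  finally show ?thesis .
qed

lemma norm_d_L2: "norm_d d u = L2_set u {..<d}"
  by (simp add: norm_d_def L2_set_def)

lemma inner_le_norm: "\<bar>\<Sum>j<d. u j * v j\<bar> \<le> norm_d d u * norm_d d v"
proof -
  have "\<bar>\<Sum>j<d. u j * v j\<bar> \<le> (\<Sum>j<d. \<bar>u j * v j\<bar>)" by (rule sum_abs)
  also have "\<dots> = (\<Sum>j<d. \<bar>u j\<bar> * \<bar>v j\<bar>)" by (simp add: abs_mult)
  also have "\<dots> \<le> norm_d d u * norm_d d v" unfolding norm_d_L2 by (rule L2_set_mult_ineq)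
  finally show ?thesis .
qed

lemma sum_abs_le_sqrt: "(\<Sum>i<n. \<bar>e i\<bar>) \<le> sqrt (real n) * sqrt (\<Sum>i<n. (e i)\<^sup>2)"
proof -
  have "(\<Sum>i<n. \<bar>e i\<bar>) = (\<Sum>i<n. \<bar>(\<lambda>_. 1::real) i\<bar> * \<bar>e i\<bar>)" by simp
  also have "\<dots> \<le> L2_set (\<lambda>_. 1::real) {..<n} * L2_set e {..<n}" by (rule L2_set_mult_ineq)
  also have "\<dots> = sqrt (real n) * sqrt (\<Sum>i<n. (e i)\<^sup>2)" by (simp add: L2_set_def)
  finally show ?thesis .
qed

context
  fixes n m d :: nat and x :: "nat \<Rightarrow> nat \<Rightarrow> real" and y a :: "nat \<Rightarrow> real"
    and lam :: real and W0 :: "nat \<Rightarrow> nat \<Rightarrow> real" and W :: "real \<Rightarrow> nat \<Rightarrow> nat \<Rightarrow> real"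
  assumes gf: "grad_flow n m d x y a lam W0 W" and lam: "lam > 0"
begin

definition "G t r j = grad_L n m d x y a lam W0 (W t) r j"
definition "zz r i t = inner_d d (W t r) (x i)"
definition "zd r i t = (\<Sum>j<d. (- G t r j) * x i j)"
definition "ee i t = f_nn m d a (W t) (x i) - y i"
definition "ed i t = (1 / sqrt (real m)) * (\<Sum>r<m. a r * (relu' (zz r i t) * zd r i t))"
definition "Lf t = (1/2) * (\<Sum>i<n. (ee i t)\<^sup>2) + (lam/2) * (\<Sum>r<m. \<Sum>j<d. (W t r j - W0 r j)\<^sup>2)"

lemma W0_eq: "r < m \<Longrightarrow> j < d \<Longrightarrow> W 0 r j = W0 r j"
  using gf by (simp add: grad_flow_def)

lemma der_within: "t \<ge> 0 \<Longrightarrow> r < m \<Longrightarrow> j < d \<Longrightarrow>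
   ((\<lambda>s. W s r j) has_real_derivative (- G t r j)) (at t within {0..})"
  using gf by (simp add: grad_flow_def G_def)

lemma der_at: "t > 0 \<Longrightarrow> r < m \<Longrightarrow> j < d \<Longrightarrow>
   ((\<lambda>s. W s r j) has_real_derivative (- G t r j)) (at t)"
proof -
  assume "t > 0" "r < m" "j < d"
  hence "t \<in> interior {0..}" by simp
  hence "at t within {0..} = at t" by (rule at_within_interior)
  thus ?thesis using der_within[of t r j] \<open>t > 0\<close> \<open>r<m\<close> \<open>j<d\<close> by simp
qed

lemma W_cont: "r < m \<Longrightarrow> j < d \<Longrightarrow> continuous_on {0..} (\<lambda>s. W s r j)"
  by (rule DERIV_continuous_on[OF der_within]) auto

lemma zz_der: "t > 0 \<Longrightarrow> r < m \<Longrightarrow> ((zz r i) has_real_derivative zd r i t) (at t)"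
  unfolding zz_def zd_def inner_d_def
  by (rule DERIV_sum, rule DERIV_cmult_right, rule der_at) auto

definition "bad = (\<Union>r\<in>{..<m}. \<Union>i\<in>{..<n}. {t. 0 < t \<and> zz r i t = 0 \<and> zd r i t \<noteq> 0})"

lemma bad_countable: "countable bad"
  unfolding bad_def
proof (intro countable_UN countable_finite[of "{..<_}"] finite_lessThan ballI countable_isolated_real)
  fix r i t assume ri: "r \<in> {..<m}" "i \<in> {..<n}" and t: "t \<in> {t. 0 < t \<and> zz r i t = 0 \<and> zd r i t \<noteq> 0}"
  obtain e where e: "e > 0" "\<forall>s. s \<noteq> t \<and> \<bar>s - t\<bar> < e \<longrightarrow> zz r i s \<noteq> zz r i t"
    using isolated_zero[OF zz_der] ri t by force
  show "\<exists>e>0. \<forall>s\<in>{t. 0 < t \<and> zz r i t = 0 \<and> zd r i t \<noteq> 0}. s \<noteq> t \<longrightarrow> e \<le> \<bar>s - t\<bar>"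
    using e t by (intro exI[of _ e]) (auto simp: not_less[symmetric])
qed

lemma ee_der: "t > 0 \<Longrightarrow> t \<notin> bad \<Longrightarrow> i < n \<Longrightarrow> ((ee i) has_real_derivative ed i t) (at t)"
proof -
  assume t: "t > 0" "t \<notin> bad" "i < n"
  have rel: "((\<lambda>s. relu (zz r i s)) has_real_derivative relu' (zz r i t) * zd r i t) (at t)" if "r < m" for r
    using that t by (intro relu_chain zz_der) (auto simp: bad_def)
  have fe: "ee i = (\<lambda>s. (1 / sqrt (real m)) * (\<Sum>r<m. a r * relu (zz r i s)) - y i)"
    by (auto simp: ee_def f_nn_def zz_def)
  have "((\<lambda>s. (1 / sqrt (real m)) * (\<Sum>r<m. a r * relu (zz r i s))) has_real_derivative
      (1 / sqrt (real m)) * (\<Sum>r<m. a r * (relu' (zz r i t) * zd r i t))) (at t)"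
    by (intro DERIV_cmult DERIV_sum) (use rel in auto)
  from DERIV_diff[OF this DERIV_const[of "y i"]] show ?thesis
    unfolding fe ed_def by simp
qed

definition "gg r j t = (\<Sum>i<n. ee i t * (1 / sqrt (real m)) * a r * relu' (zz r i t) * x i j)"

lemma G_split: "G t r j = gg r j t + lam * (W t r j - W0 r j)"
  by (simp add: G_def grad_L_def gg_def ee_def zz_def)

lemma Lf_der: "t > 0 \<Longrightarrow> t \<notin> bad \<Longrightarrow>
   (Lf has_real_derivative (\<Sum>r<m. \<Sum>j<d. (- G t r j) * G t r j)) (at t)"
proof -
  assume t: "t > 0" "t \<notin> bad"
  have d1: "((\<lambda>s. (ee i s)\<^sup>2) has_real_derivative 2 * (ee i t * ed i t)) (at t)" if "i < n" for i
    using DERIV_power[OF ee_der[OF t that], of 2] by (simp add: mult_ac)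
  have d2: "((\<lambda>s. (W s r j - W0 r j)\<^sup>2) has_real_derivative 2 * ((W t r j - W0 r j) * (- G t r j))) (at t)"
    if "r < m" "j < d" for r j
  proof -
    have "((\<lambda>s. W s r j - W0 r j) has_real_derivative (- G t r j)) (at t)"
      using DERIV_diff[OF der_at[OF t(1) that] DERIV_const[of "W0 r j"]] by simp
    from DERIV_power[OF this, of 2] show ?thesis by (simp add: mult_ac)
  qed
  have "(Lf has_real_derivative (1/2) * (\<Sum>i<n. 2 * (ee i t * ed i t)) +
           (lam/2) * (\<Sum>r<m. \<Sum>j<d. 2 * ((W t r j - W0 r j) * (- G t r j)))) (at t)"
    unfolding Lf_def[abs_def]
    by (intro DERIV_add DERIV_cmult DERIV_sum) (use d1 d2 in auto)
  moreover have "(1/2) * (\<Sum>i<n. 2 * (ee i t * ed i t)) +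
           (lam/2) * (\<Sum>r<m. \<Sum>j<d. 2 * ((W t r j - W0 r j) * (- G t r j)))
      = (\<Sum>r<m. \<Sum>j<d. (- G t r j) * G t r j)"
  proof -
    have "(\<Sum>i<n. ee i t * ed i t) = (\<Sum>r<m. \<Sum>j<d. (- G t r j) * gg r j t)"
      unfolding ed_def zd_def gg_def by (rule swap_lemma)
    hence "(1/2) * (\<Sum>i<n. 2 * (ee i t * ed i t)) +
           (lam/2) * (\<Sum>r<m. \<Sum>j<d. 2 * ((W t r j - W0 r j) * (- G t r j)))
         = (\<Sum>r<m. \<Sum>j<d. (- G t r j) * gg r j t) + (\<Sum>r<m. \<Sum>j<d. (- G t r j) * (lam * (W t r j - W0 r j)))"
      by (simp add: sum_distrib_left mult_ac flip: sum.distrib)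
    also have "\<dots> = (\<Sum>r<m. \<Sum>j<d. (- G t r j) * gg r j t + (- G t r j) * (lam * (W t r j - W0 r j)))"
      by (simp only: sum.distrib)
    also have "\<dots> = (\<Sum>r<m. \<Sum>j<d. (- G t r j) * G t r j)"
      by (simp only: distrib_left[symmetric] G_split[symmetric])
    finally show ?thesis .
  qed
  ultimately show ?thesis by simp
qed

lemma Lf_mono: "s \<ge> 0 \<Longrightarrow> Lf s \<le> Lf 0"
proof -
  assume s: "s \<ge> 0"
  have Wc: "continuous_on {0..s} (\<lambda>t. W t r j)" if "r < m" "j < d" for r j
    using W_cont[OF that] by (rule continuous_on_subset) auto
  show ?thesis
  proof (rule deriv_nonpos_countable[OF s _ bad_countable])
    show "continuous_on {0..s} Lf"
      unfolding Lf_def[abs_def] ee_def f_nn_def inner_d_def relu_def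
      by (intro continuous_intros Wc) auto
    fix t assume "t \<in> {0<..<s} - bad"
    hence "t > 0" "t \<notin> bad" by auto
    moreover have "(\<Sum>r<m. \<Sum>j<d. (- G t r j) * G t r j) \<le> 0"
      by (intro sum_nonpos) auto
    ultimately show "\<exists>D. (Lf has_real_derivative D) (at t) \<and> D \<le> 0"
      using Lf_der by blast
  qed
qed

lemma Lf_nonneg: "Lf s \<ge> 0"
  unfolding Lf_def using lam by (intro add_nonneg_nonneg mult_nonneg_nonneg sum_nonneg) auto

lemma sum_ee_le: "(\<Sum>i<n. (ee i s)\<^sup>2) \<le> 2 * Lf s"
proof -
  have "0 \<le> (lam/2) * (\<Sum>r<m. \<Sum>j<d. (W s r j - W0 r j)\<^sup>2)"
    using lam by (intro mult_nonneg_nonneg sum_nonneg) auto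
  thus ?thesis unfolding Lf_def by simp
qed

lemma gg_bound:
  assumes r: "r < m" and ar: "\<bar>a r\<bar> \<le> 1" and xn: "\<forall>i<n. norm_d d (x i) = 1"
  shows "\<bar>\<Sum>j<d. v j * gg r j s\<bar> \<le> norm_d d v * (sqrt (real n) * sqrt (2 * Lf s) / sqrt (real m))"
proof -
  define c where "c i = ee i s * (1 / sqrt (real m)) * a r * relu' (zz r i s)" for i
  have eq: "(\<Sum>j<d. v j * gg r j s) = (\<Sum>i<n. c i * (\<Sum>j<d. v j * x i j))"
  proof -
    have "(\<Sum>j<d. v j * gg r j s) = (\<Sum>j<d. \<Sum>i<n. c i * (v j * x i j))"
      unfolding gg_def c_def by (simp add: sum_distrib_left mult_ac)
    also have "\<dots> = (\<Sum>i<n. \<Sum>j<d. c i * (v j * x i j))" by (rule sum.swap)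
    also have "\<dots> = (\<Sum>i<n. c i * (\<Sum>j<d. v j * x i j))" by (simp add: sum_distrib_left)
    finally show ?thesis .
  qed
  have m0: "sqrt (real m) \<ge> 0" by simp
  have ci: "\<bar>c i\<bar> \<le> \<bar>ee i s\<bar> / sqrt (real m)" for i
  proof -
    have "\<bar>c i\<bar> = \<bar>ee i s\<bar> / sqrt (real m) * (\<bar>a r\<bar> * \<bar>relu' (zz r i s)\<bar>)"
      by (simp add: c_def abs_mult)
    also have "\<dots> \<le> \<bar>ee i s\<bar> / sqrt (real m) * 1"
      using ar by (intro mult_left_mono) (auto simp: relu'_def)
    finally show ?thesis by simp
  qed
  have "\<bar>\<Sum>j<d. v j * gg r j s\<bar> \<le> (\<Sum>i<n. \<bar>c i * (\<Sum>j<d. v j * x i j)\<bar>)"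
    unfolding eq by (rule sum_abs)
  also have "\<dots> \<le> (\<Sum>i<n. \<bar>ee i s\<bar> / sqrt (real m) * norm_d d v)"
  proof (rule sum_mono)
    fix i assume "i \<in> {..<n}"
    hence "\<bar>\<Sum>j<d. v j * x i j\<bar> \<le> norm_d d v" using inner_le_norm[where d=d and u=v and v="x i"] xn by auto
    thus "\<bar>c i * (\<Sum>j<d. v j * x i j)\<bar> \<le> \<bar>ee i s\<bar> / sqrt (real m) * norm_d d v"
      unfolding abs_mult using ci by (intro mult_mono) auto
  qed
  also have "\<dots> = norm_d d v / sqrt (real m) * (\<Sum>i<n. \<bar>ee i s\<bar>)"
    by (simp add: sum_distrib_left algebra_simps)
  also have "\<dots> \<le> norm_d d v / sqrt (real m) * (sqrt (real n) * sqrt (2 * Lf s))"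
  proof (rule mult_left_mono)
    have "(\<Sum>i<n. \<bar>ee i s\<bar>) \<le> sqrt (real n) * sqrt (\<Sum>i<n. (ee i s)\<^sup>2)" by (rule sum_abs_le_sqrt)
    also have "\<dots> \<le> sqrt (real n) * sqrt (2 * Lf s)"
      by (intro mult_left_mono real_sqrt_le_mono sum_ee_le) auto
    finally show "(\<Sum>i<n. \<bar>ee i s\<bar>) \<le> sqrt (real n) * sqrt (2 * Lf s)" .
    show "0 \<le> norm_d d v / sqrt (real m)" by (simp add: norm_d_def sum_nonneg)
  qed
  finally show ?thesis by simp
qed

lemma u_der: "t > 0 \<Longrightarrow> r < m \<Longrightarrow> j < d \<Longrightarrow>
   ((\<lambda>s. W s r j - W0 r j) has_real_derivative (- G t r j)) (at t)"
  using DERIV_diff[OF der_at DERIV_const[of "W0 r j"]] by simp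

lemma u_bound:
  assumes ar: "\<forall>r<m. \<bar>a r\<bar> \<le> 1" and xn: "\<forall>i<n. norm_d d (x i) = 1"
    and LB: "\<forall>s\<ge>0. 2 * Lf s \<le> B" and t0: "t0 \<ge> 0" and r: "r < m"
  shows "norm_d d (\<lambda>j. W t0 r j - W0 r j) \<le> sqrt (real n) * sqrt B / (sqrt (real m) * lam)"
proof -
  define Gb where "Gb = sqrt (real n) * sqrt B / sqrt (real m)"
  have B0: "B \<ge> 0" using LB Lf_nonneg[of 0] by force
  have Gb0: "Gb \<ge> 0" using B0 by (simp add: Gb_def)
  have rhs: "sqrt (real n) * sqrt B / (sqrt (real m) * lam) = Gb / lam" by (simp add: Gb_def)
  define v where "v j = W t0 r j - W0 r j" for j
  define N where "N = norm_d d v"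
  have N0: "N \<ge> 0" by (simp add: N_def norm_d_def sum_nonneg)
  define K where "K = N * Gb"
  have K0: "K \<ge> 0" using N0 Gb0 by (simp add: K_def)
  define S where "S t = (\<Sum>j<d. v j * (W t r j - W0 r j))" for t
  define \<psi> where "\<psi> t = exp (lam * t) * S t - (K / lam) * exp (lam * t)" for t
  show ?thesis
  proof (cases "t0 = 0")
    case True
    have "norm_d d (\<lambda>j. W t0 r j - W0 r j) = 0"
      unfolding norm_d_def using True W0_eq r by simp
    thus ?thesis using rhs Gb0 lam by simp
  next
    case False
    hence t0p: "t0 > 0" using t0 by simp
    have Wc: "continuous_on {0..t0} (\<lambda>t. W t r j)" if "j < d" for j
      using W_cont[OF r that] by (rule continuous_on_subset) auto
    have "\<psi> t0 \<le> \<psi> 0"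
    proof (rule deriv_nonpos_countable[OF t0 _ countable_empty])
      show "continuous_on {0..t0} \<psi>"
        unfolding \<psi>_def[abs_def] S_def by (intro continuous_intros Wc) auto
      fix t assume "t \<in> {0<..<t0} - {}"
      hence t: "t > 0" by simp
      have dS: "(S has_real_derivative (\<Sum>j<d. v j * (- G t r j))) (at t)"
        unfolding S_def[abs_def] by (intro DERIV_sum DERIV_cmult u_der t r) auto
      have dE: "((\<lambda>s. exp (lam * s)) has_real_derivative exp (lam * t) * lam) (at t)"
        by (auto intro!: derivative_eq_intros)
      have d\<psi>: "(\<psi> has_real_derivative (exp (lam * t) * (\<Sum>j<d. v j * (- G t r j)) + exp (lam * t) * lam * S t)
                  - (K / lam) * (exp (lam * t) * lam)) (at t)"
        unfolding \<psi>_def[abs_def] by (rule DERIV_diff[OF DERIV_mult'[OF dE dS] DERIV_cmult[OF dE]])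
      have "(\<Sum>j<d. v j * (- G t r j)) = (\<Sum>j<d. - (v j * gg r j t) - lam * (v j * (W t r j - W0 r j)))"
        unfolding G_split by (intro sum.cong refl) (simp add: algebra_simps)
      also have "\<dots> = - (\<Sum>j<d. v j * gg r j t) - lam * S t"
        unfolding S_def by (simp add: sum_subtractf sum_negf sum_distrib_left)
      finally have eqX: "(\<Sum>j<d. v j * (- G t r j)) = - (\<Sum>j<d. v j * gg r j t) - lam * S t" .
      have Deq: "exp (lam * t) * (\<Sum>j<d. v j * (- G t r j)) + exp (lam * t) * lam * S t
                  - (K / lam) * (exp (lam * t) * lam) = exp (lam * t) * (- (\<Sum>j<d. v j * gg r j t) - K)"
        unfolding eqX using lam by (simp add: field_simps)
      have "\<bar>\<Sum>j<d. v j * gg r j t\<bar> \<le> N * (sqrt (real n) * sqrt (2 * Lf t) / sqrt (real m))"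
        unfolding N_def using gg_bound r ar xn by auto
      also have "\<dots> \<le> K" unfolding K_def Gb_def
        using LB t N0 by (intro mult_left_mono divide_right_mono mult_left_mono real_sqrt_le_mono) auto
      finally have "- (\<Sum>j<d. v j * gg r j t) - K \<le> 0" by linarith
      hence "exp (lam * t) * (- (\<Sum>j<d. v j * gg r j t) - K) \<le> 0"
        by (simp add: mult_nonneg_nonpos)
      thus "\<exists>D. (\<psi> has_real_derivative D) (at t) \<and> D \<le> 0" using d\<psi> Deq by metis
    qed
    moreover have "\<psi> 0 = - (K / lam)"
      unfolding \<psi>_def S_def using W0_eq r by simp
    moreover have "S t0 = N\<^sup>2"
      unfolding S_def N_def norm_d_def v_def by (simp add: power2_eq_square sum_nonneg)
    ultimately have "exp (lam * t0) * (N\<^sup>2 - K / lam) \<le> - (K / lam)"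
      unfolding \<psi>_def by (simp add: algebra_simps)
    also have "\<dots> \<le> 0" using K0 lam by simp
    finally have "N\<^sup>2 - K / lam \<le> 0"
      by (simp add: mult_le_0_iff)
    hence "N * N \<le> N * (Gb / lam)" unfolding K_def by (simp add: power2_eq_square)
    hence NN: "N * N \<le> N * (Gb / lam)" .
    have "N \<le> Gb / lam"
    proof (cases "N = 0")
      case True thus ?thesis using Gb0 lam by simp
    next
      case False hence "N > 0" using N0 by simp
      thus ?thesis using NN by (metis mult_le_cancel_left_pos)
    qed
    thus ?thesis unfolding rhs N_def v_def .
  qed
qed

lemma fnn_W0: "f_nn m d a (W 0) xv = f_nn m d a W0 xv"
proof -
  have h: "a r * relu (inner_d d (W 0 r) xv) = a r * relu (inner_d d (W0 r) xv)" if "r \<in> {..<m}" for r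
  proof -
    have "inner_d d (W 0 r) xv = inner_d d (W0 r) xv"
      unfolding inner_d_def by (rule sum.cong[OF refl]) (use that W0_eq in auto)
    thus ?thesis by simp
  qed
  have "(\<Sum>r<m. a r * relu (inner_d d (W 0 r) xv)) = (\<Sum>r<m. a r * relu (inner_d d (W0 r) xv))"
    by (rule sum.cong[OF refl]) (rule h)
  thus ?thesis by (simp add: f_nn_def)
qed

lemma final_bound:
  assumes ar: "\<forall>r<m. \<bar>a r\<bar> \<le> 1" and xn: "\<forall>i<n. norm_d d (x i) = 1"
    and B: "(\<Sum>i<n. (f_nn m d a W0 (x i) - y i)\<^sup>2) \<le> B" and t0: "t0 \<ge> 0" and r: "r < m"
  shows "norm_d d (\<lambda>j. W t0 r j - W0 r j) \<le> sqrt (real n) * sqrt B / (sqrt (real m) * lam)"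
proof (rule u_bound[OF ar xn _ t0 r], intro allI impI)
  fix s :: real assume s: "s \<ge> 0"
  have "2 * Lf s \<le> 2 * Lf 0" using Lf_mono[OF s] by simp
  also have "2 * Lf 0 = (\<Sum>i<n. (f_nn m d a W0 (x i) - y i)\<^sup>2)"
  proof -
    have reg: "(\<Sum>r<m. \<Sum>j<d. (W 0 r j - W0 r j)\<^sup>2) = 0"
      by (intro sum.neutral ballI) (auto simp: W0_eq)
    show ?thesis by (simp add: Lf_def ee_def fnn_W0 reg)
  qed
  finally show "2 * Lf s \<le> B" using B by simp
qed

end


lemma prod_two:
  assumes "finite I" "i \<in> I" "j \<in> I"
  shows "(\<Prod>k\<in>I. (if k = i then (if i = j then A * B else A) else if k = j then B else (1::real))) = A * B"
proof (cases "i = j")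
  case True
  have "(\<Prod>k\<in>I. (if k = i then (if i = j then A * B else A) else if k = j then B else (1::real)))
      = (if i = j then A * B else A) * (\<Prod>k\<in>I - {i}. (if k = i then (if i = j then A * B else A) else if k = j then B else (1::real)))"
    using assms by (simp add: prod.remove)
  also have "(\<Prod>k\<in>I - {i}. (if k = i then (if i = j then A * B else A) else if k = j then B else (1::real))) = 1"
    using True by (intro prod.neutral) auto
  finally show ?thesis using True by simp
next
  case False
  let ?F = "\<lambda>k. (if k = i then (if i = j then A * B else A) else if k = j then B else (1::real))"
  have e1: "prod ?F I = ?F i * prod ?F (I - {i})" using assms by (simp add: prod.remove)
  have e2: "prod ?F (I - {i}) = ?F j * prod ?F (I - {i} - {j})"
    using assms False by (intro prod.remove) auto
  have e3: "prod ?F (I - {i} - {j}) = 1" by (intro prod.neutral) auto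
  show ?thesis unfolding e1 e2 e3 using False by simp
qed

lemma sq_sum_PiM:
  fixes M :: "'i \<Rightarrow> 'a measure" and g :: "'i \<Rightarrow> 'a \<Rightarrow> real"
  assumes I: "finite I" and Mprob: "\<And>i. prob_space (M i)"
    and int: "\<And>i. i \<in> I \<Longrightarrow> integrable (M i) (g i)"
    and int2: "\<And>i. i \<in> I \<Longrightarrow> integrable (M i) (\<lambda>x. (g i x)\<^sup>2)"
    and mean0: "\<And>i. i \<in> I \<Longrightarrow> integral\<^sup>L (M i) (g i) = 0"
  shows "integrable (PiM I M) (\<lambda>\<omega>. (\<Sum>i\<in>I. g i (\<omega> i))\<^sup>2) \<and>
         integral\<^sup>L (PiM I M) (\<lambda>\<omega>. (\<Sum>i\<in>I. g i (\<omega> i))\<^sup>2) = (\<Sum>i\<in>I. integral\<^sup>L (M i) (\<lambda>x. (g i x)\<^sup>2))"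
proof -
  interpret product_prob_space M I
    by (simp add: product_prob_space_def product_prob_space_axioms_def product_sigma_finite_def Mprob
          prob_space_imp_sigma_finite)
  define f where "f i j k x = (if k = i then (if i = j then g i x * g j x else g i x) else if k = j then g j x else 1)"
    for i j k x
  have feq: "f i j k = (if k = i then (if i = j then (\<lambda>x. (g i x)\<^sup>2) else g i) else if k = j then g j else (\<lambda>_. 1))" for i j k
    by (auto simp: f_def fun_eq_iff power2_eq_square)
  have fint: "integrable (M k) (f i j k)" if "i \<in> I" "j \<in> I" for i j k
    unfolding feq using int int2 that finite_measure.integrable_const[OF prob_space.axioms(1)[OF Mprob]]
    by auto
  have hprod: "g i (\<omega> i) * g j (\<omega> j) = (\<Prod>k\<in>I. f i j k (\<omega> k))" if "i \<in> I" "j \<in> I" for i j \<omega>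
    unfolding f_def using prod_two[OF I that, of "g i (\<omega> i)" "g j (\<omega> j)"]
    by (simp add: if_distrib cong: if_cong)
  have hint: "integrable (PiM I M) (\<lambda>\<omega>. g i (\<omega> i) * g j (\<omega> j))" if "i \<in> I" "j \<in> I" for i j
    unfolding hprod[OF that] by (rule product_integrable_prod[OF I fint[OF that]])
  have hval: "integral\<^sup>L (PiM I M) (\<lambda>\<omega>. g i (\<omega> i) * g j (\<omega> j)) =
      (if i = j then integral\<^sup>L (M i) (\<lambda>x. (g i x)\<^sup>2) else 0)" if "i \<in> I" "j \<in> I" for i j
  proof -
    define A where "A = (if i = j then integral\<^sup>L (M i) (\<lambda>x. (g i x)\<^sup>2) else integral\<^sup>L (M i) (g i))"
    define B where "B = (if i = j then 1 else integral\<^sup>L (M j) (g j))"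
    have "integral\<^sup>L (PiM I M) (\<lambda>\<omega>. g i (\<omega> i) * g j (\<omega> j)) = (\<Prod>k\<in>I. integral\<^sup>L (M k) (f i j k))"
      unfolding hprod[OF that] by (rule product_integral_prod[OF I fint[OF that]])
    also have "\<dots> = (\<Prod>k\<in>I. (if k = i then (if i = j then A * B else A) else if k = j then B else 1))"
      by (intro prod.cong refl) (auto simp: feq A_def B_def prob_space.prob_space[OF Mprob])
    also have "\<dots> = A * B" by (rule prod_two[OF I that])
    finally show ?thesis using mean0 that by (simp add: A_def B_def)
  qed
  have sq: "(\<Sum>i\<in>I. g i (\<omega> i))\<^sup>2 = (\<Sum>i\<in>I. \<Sum>j\<in>I. g i (\<omega> i) * g j (\<omega> j))" for \<omega>
    by (simp add: power2_eq_square sum_product)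
  have "integrable (PiM I M) (\<lambda>\<omega>. (\<Sum>i\<in>I. \<Sum>j\<in>I. g i (\<omega> i) * g j (\<omega> j)))"
    using hint by (intro Bochner_Integration.integrable_sum) auto
  moreover have "integral\<^sup>L (PiM I M) (\<lambda>\<omega>. (\<Sum>i\<in>I. \<Sum>j\<in>I. g i (\<omega> i) * g j (\<omega> j)))
      = (\<Sum>i\<in>I. \<Sum>j\<in>I. integral\<^sup>L (PiM I M) (\<lambda>\<omega>. g i (\<omega> i) * g j (\<omega> j)))"
    using hint by (simp add: Bochner_Integration.integral_sum Bochner_Integration.integrable_sum)
  moreover have "\<dots> = (\<Sum>i\<in>I. integral\<^sup>L (M i) (\<lambda>x. (g i x)\<^sup>2))"
    using I by (simp add: hval cong: sum.cong)
  ultimately show ?thesis unfolding sq by simp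
qed


abbreviation "NN \<kappa> \<equiv> density lborel (normal_density 0 \<kappa>)"
abbreviation "Mw (d::nat) (m::nat) \<kappa> \<equiv> PiM {..<m} (\<lambda>_. PiM {..<d} (\<lambda>_. NN \<kappa>))"
abbreviation "Ma (m::nat) \<equiv> PiM {..<m} (\<lambda>_. measure_pmf (pmf_of_set {-1, 1::real}))"

lemma NN_prob: "\<kappa> > 0 \<Longrightarrow> prob_space (NN \<kappa>)"
  by (rule prob_space_normal_density)

lemma NN_facts:
  assumes k: "\<kappa> > 0"
  shows "integrable (NN \<kappa>) (\<lambda>t. t * c)" "integrable (NN \<kappa>) (\<lambda>t. (t * c)\<^sup>2)"
    "integral\<^sup>L (NN \<kappa>) (\<lambda>t. t * c) = 0" "integral\<^sup>L (NN \<kappa>) (\<lambda>t. (t * c)\<^sup>2) = c\<^sup>2 * \<kappa>\<^sup>2"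
proof -
  have h1: "has_bochner_integral lborel (\<lambda>x. normal_density 0 \<kappa> x * x) 0"
    using normal_moment_odd[OF k, of 0 0] by simp
  have h2: "has_bochner_integral lborel (\<lambda>x. normal_density 0 \<kappa> x * x\<^sup>2) (\<kappa>\<^sup>2)"
    using normal_moment_even[OF k, of 0 1] by simp
  have e1: "(\<lambda>x. normal_density 0 \<kappa> x *\<^sub>R (x * c)) = (\<lambda>x. c * (normal_density 0 \<kappa> x * x))"
    by (auto simp: fun_eq_iff)
  have e2: "(\<lambda>x. normal_density 0 \<kappa> x *\<^sub>R (x * c)\<^sup>2) = (\<lambda>x. c\<^sup>2 * (normal_density 0 \<kappa> x * x\<^sup>2))"
    by (auto simp: fun_eq_iff power_mult_distrib)
  have hb1: "has_bochner_integral lborel (\<lambda>x. normal_density 0 \<kappa> x *\<^sub>R (x * c)) 0"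
    unfolding e1 using has_bochner_integral_mult_right[OF h1, of c] by simp
  have hb2: "has_bochner_integral lborel (\<lambda>x. normal_density 0 \<kappa> x *\<^sub>R (x * c)\<^sup>2) (c\<^sup>2 * \<kappa>\<^sup>2)"
    unfolding e2 using has_bochner_integral_mult_right[OF h2, of "c\<^sup>2"] by simp
  show "integrable (NN \<kappa>) (\<lambda>t. t * c)"
    using hb1 by (subst integrable_density) (auto intro: integrable.intros)
  show "integrable (NN \<kappa>) (\<lambda>t. (t * c)\<^sup>2)"
    using hb2 by (subst integrable_density) (auto intro: integrable.intros)
  show "integral\<^sup>L (NN \<kappa>) (\<lambda>t. t * c) = 0"
    by (subst integral_density) (use hb1 in \<open>auto dest: has_bochner_integral_integral_eq\<close>)
  show "integral\<^sup>L (NN \<kappa>) (\<lambda>t. (t * c)\<^sup>2) = c\<^sup>2 * \<kappa>\<^sup>2"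
    by (subst integral_density) (use hb2 in \<open>auto dest: has_bochner_integral_integral_eq\<close>)
qed

lemma gauss_inner:
  fixes d :: nat
  assumes k: "\<kappa> > 0"
  shows "integrable (PiM {..<d} (\<lambda>_. NN \<kappa>)) (\<lambda>v. (\<Sum>j<d. v j * c j)\<^sup>2) \<and>
         integral\<^sup>L (PiM {..<d} (\<lambda>_. NN \<kappa>)) (\<lambda>v. (\<Sum>j<d. v j * c j)\<^sup>2) = \<kappa>\<^sup>2 * (\<Sum>j<d. (c j)\<^sup>2)"
proof -
  have "integrable (PiM {..<d} (\<lambda>_. NN \<kappa>)) (\<lambda>v. (\<Sum>j<d. v j * c j)\<^sup>2) \<and>
         integral\<^sup>L (PiM {..<d} (\<lambda>_. NN \<kappa>)) (\<lambda>v. (\<Sum>j<d. v j * c j)\<^sup>2) =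
         (\<Sum>j<d. integral\<^sup>L (NN \<kappa>) (\<lambda>t. (t * c j)\<^sup>2))"
    by (rule sq_sum_PiM[of "{..<d}" "\<lambda>_. NN \<kappa>" "\<lambda>j t. t * c j"], simp, (simp only: NN_facts[OF k] NN_prob[OF k])+)
  thus ?thesis by (simp only: NN_facts[OF k] sum_distrib_left mult.commute)
qed

lemma pmf_facts:
  shows "integrable (measure_pmf (pmf_of_set {-1, 1::real})) (\<lambda>t. t * c)"
    "integrable (measure_pmf (pmf_of_set {-1, 1::real})) (\<lambda>t. (t * c)\<^sup>2)"
    "integral\<^sup>L (measure_pmf (pmf_of_set {-1, 1::real})) (\<lambda>t. t * c) = 0"
    "integral\<^sup>L (measure_pmf (pmf_of_set {-1, 1::real})) (\<lambda>t. (t * c)\<^sup>2) = c\<^sup>2"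
  by (auto intro!: integrable_measure_pmf_finite simp: integral_pmf_of_set power_mult_distrib)

lemma sign_sq:
  fixes m :: nat
  shows "integrable (Ma m) (\<lambda>a. (\<Sum>r<m. a r * c r)\<^sup>2) \<and>
         integral\<^sup>L (Ma m) (\<lambda>a. (\<Sum>r<m. a r * c r)\<^sup>2) = (\<Sum>r<m. (c r)\<^sup>2)"
proof -
  have "integrable (Ma m) (\<lambda>a. (\<Sum>r<m. a r * c r)\<^sup>2) \<and>
         integral\<^sup>L (Ma m) (\<lambda>a. (\<Sum>r<m. a r * c r)\<^sup>2) =
         (\<Sum>r<m. integral\<^sup>L (measure_pmf (pmf_of_set {-1, 1::real})) (\<lambda>t. (t * c r)\<^sup>2))"
    by (rule sq_sum_PiM[of "{..<m}" "\<lambda>_. measure_pmf (pmf_of_set {-1, 1::real})" "\<lambda>r t. t * c r"], simp, (simp only: pmf_facts measure_pmf.prob_space_axioms)+)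
  thus ?thesis by (simp only: pmf_facts)
qed

lemma comp_integral:
  fixes h :: "_ \<Rightarrow> real" and d m :: nat
  assumes k: "\<kappa> > 0" and r: "r < m" and hm: "h \<in> borel_measurable (PiM {..<d} (\<lambda>_. NN \<kappa>))"
  shows "integrable (Mw d m \<kappa>) (\<lambda>w. h (w r)) \<longleftrightarrow> integrable (PiM {..<d} (\<lambda>_. NN \<kappa>)) h"
    "integral\<^sup>L (Mw d m \<kappa>) (\<lambda>w. h (w r)) = integral\<^sup>L (PiM {..<d} (\<lambda>_. NN \<kappa>)) h"
proof -
  interpret P: product_prob_space "\<lambda>_. NN \<kappa>" "{..<d}"
    by (simp add: product_prob_space_def product_prob_space_axioms_def product_sigma_finite_def NN_prob[OF k]
          prob_space_imp_sigma_finite)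
  have pr: "prob_space (PiM {..<d} (\<lambda>_. NN \<kappa>))" by (rule P.prob_space_axioms)
  have D: "distr (Mw d m \<kappa>) (PiM {..<d} (\<lambda>_. NN \<kappa>)) (\<lambda>\<omega>. \<omega> r) = PiM {..<d} (\<lambda>_. NN \<kappa>)"
    using distr_PiM_component[of "{..<m}" "\<lambda>_. PiM {..<d} (\<lambda>_. NN \<kappa>)" r] pr r by simp
  have meas: "(\<lambda>\<omega>. \<omega> r) \<in> measurable (Mw d m \<kappa>) (PiM {..<d} (\<lambda>_. NN \<kappa>))"
    using r by (intro measurable_component_singleton) simp
  show "integrable (Mw d m \<kappa>) (\<lambda>w. h (w r)) \<longleftrightarrow> integrable (PiM {..<d} (\<lambda>_. NN \<kappa>)) h"
    using integrable_distr_eq[OF meas hm] D by simp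
  show "integral\<^sup>L (Mw d m \<kappa>) (\<lambda>w. h (w r)) = integral\<^sup>L (PiM {..<d} (\<lambda>_. NN \<kappa>)) h"
    using integral_distr[OF meas hm] D by simp
qed

lemma inner_meas: fixes d :: nat shows "(\<lambda>v. (\<Sum>j<d. v j * c j)\<^sup>2) \<in> borel_measurable (PiM {..<d} (\<lambda>_. NN \<kappa>))"
  by measurable



lemma prob_PiM_const: "prob_space M \<Longrightarrow> prob_space (PiM I (\<lambda>_. M))"
proof -
  assume pm: "prob_space M"
  interpret P: product_prob_space "\<lambda>_. M" I
    by (simp add: product_prob_space_def product_prob_space_axioms_def product_sigma_finite_def pm
          prob_space_imp_sigma_finite)
  show ?thesis by (rule P.prob_space_axioms)
qed

lemma init_eq: "init_measure d m \<kappa> = Mw d m \<kappa> \<Otimes>\<^sub>M Ma m"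
  by (simp add: init_measure_def)

lemma mf_meas:
  fixes m d :: nat
  shows "r \<in> {..<m} \<Longrightarrow> j \<in> {..<d} \<Longrightarrow> (\<lambda>\<omega>. fst \<omega> r j) \<in> borel_measurable (Mw d m \<kappa> \<Otimes>\<^sub>M Ma m)"
proof -
  assume r: "r \<in> {..<m}" and j: "j \<in> {..<d}"
  have "(\<lambda>v. v j) \<in> measurable (PiM {..<d} (\<lambda>_. NN \<kappa>)) (NN \<kappa>)"
    using j by (rule measurable_component_singleton)
  moreover have "(\<lambda>t. t) \<in> measurable (NN \<kappa>) borel"
    by (simp add: measurable_ident_sets)
  ultimately have h1: "(\<lambda>v. v j) \<in> borel_measurable (PiM {..<d} (\<lambda>_. NN \<kappa>))"
    using measurable_compose by fastforce
  have h2: "(\<lambda>w. w r) \<in> measurable (Mw d m \<kappa>) (PiM {..<d} (\<lambda>_. NN \<kappa>))"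
    using r by (rule measurable_component_singleton)
  have h3: "fst \<in> measurable (Mw d m \<kappa> \<Otimes>\<^sub>M Ma m) (Mw d m \<kappa>)" by (rule measurable_fst)
  show ?thesis using measurable_compose[OF measurable_compose[OF h3 h2] h1] by (simp add: comp_def)
qed

lemma ms_meas:
  fixes m d :: nat
  shows "r \<in> {..<m} \<Longrightarrow> (\<lambda>\<omega>. snd \<omega> r) \<in> borel_measurable (Mw d m \<kappa> \<Otimes>\<^sub>M Ma m)"
proof -
  assume r: "r \<in> {..<m}"
  have h2: "(\<lambda>w. w r) \<in> measurable (Ma m) (measure_pmf (pmf_of_set {-1, 1::real}))"
    using r by (rule measurable_component_singleton)
  have h1: "(\<lambda>t. t) \<in> borel_measurable (measure_pmf (pmf_of_set {-1, 1::real}))" by simp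
  have h3: "snd \<in> measurable (Mw d m \<kappa> \<Otimes>\<^sub>M Ma m) (Ma m)" by (rule measurable_snd)
  show ?thesis using measurable_compose[OF measurable_compose[OF h3 h2] h1] by (simp add: comp_def)
qed

lemma X_meas:
  fixes n m d :: nat and x :: "nat \<Rightarrow> nat \<Rightarrow> real"
  shows "(\<lambda>\<omega>. \<Sum>i<n. (f_nn m d (snd \<omega>) (fst \<omega>) (x i))\<^sup>2) \<in> borel_measurable (Mw d m \<kappa> \<Otimes>\<^sub>M Ma m)"
  unfolding f_nn_def inner_d_def relu_def
  by (intro borel_measurable_sum borel_measurable_power borel_measurable_times borel_measurable_const
      borel_measurable_max mf_meas ms_meas) auto

lemma fnn_eq: "f_nn m d a w xv = (\<Sum>r<m. a r * (relu (inner_d d (w r) xv) / sqrt (real m)))"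
  by (simp add: f_nn_def sum_distrib_left)

lemma expect_bound:
  fixes n m d :: nat and x :: "nat \<Rightarrow> nat \<Rightarrow> real"
  assumes k: "\<kappa> > 0" and m: "m \<ge> 1" and xn: "\<forall>i<n. (\<Sum>j<d. (x i j)\<^sup>2) = 1"
  shows "(\<integral>\<^sup>+ \<omega>. ennreal (\<Sum>i<n. (f_nn m d (snd \<omega>) (fst \<omega>) (x i))\<^sup>2) \<partial>(Mw d m \<kappa> \<Otimes>\<^sub>M Ma m))
          \<le> ennreal (real n * \<kappa>\<^sup>2)"
proof -
  interpret Pa: prob_space "Ma m" by (rule prob_PiM_const) (rule measure_pmf.prob_space_axioms)
  interpret Pw: prob_space "Mw d m \<kappa>" by (intro prob_PiM_const NN_prob k)
  define c where "c (w :: nat \<Rightarrow> nat \<Rightarrow> real) i (r::nat) = relu (inner_d d (w r) (x i)) / sqrt (real m)" for w i r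
  have "(\<integral>\<^sup>+ \<omega>. ennreal (\<Sum>i<n. (f_nn m d (snd \<omega>) (fst \<omega>) (x i))\<^sup>2) \<partial>(Mw d m \<kappa> \<Otimes>\<^sub>M Ma m))
      = (\<integral>\<^sup>+ w. \<integral>\<^sup>+ a. ennreal (\<Sum>i<n. (f_nn m d a w (x i))\<^sup>2) \<partial>Ma m \<partial>Mw d m \<kappa>)"
    using Pa.nn_integral_fst[of "\<lambda>\<omega>. ennreal (\<Sum>i<n. (f_nn m d (snd \<omega>) (fst \<omega>) (x i))\<^sup>2)" "Mw d m \<kappa>"]
      X_meas by simp
  also have "\<dots> = (\<integral>\<^sup>+ w. ennreal (\<Sum>i<n. \<Sum>r<m. (c w i r)\<^sup>2) \<partial>Mw d m \<kappa>)"
  proof (rule nn_integral_cong)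
    fix w
    have eq: "(\<Sum>i<n. (f_nn m d a w (x i))\<^sup>2) = (\<Sum>i<n. (\<Sum>r<m. a r * c w i r)\<^sup>2)" for a
      by (simp add: fnn_eq c_def)
    have ii: "integrable (Ma m) (\<lambda>a. \<Sum>i<n. (\<Sum>r<m. a r * c w i r)\<^sup>2)"
      using sign_sq by (intro Bochner_Integration.integrable_sum) auto
    have iv: "integral\<^sup>L (Ma m) (\<lambda>a. \<Sum>i<n. (\<Sum>r<m. a r * c w i r)\<^sup>2) = (\<Sum>i<n. \<Sum>r<m. (c w i r)\<^sup>2)"
      using sign_sq by (simp add: Bochner_Integration.integral_sum)
    show "(\<integral>\<^sup>+ a. ennreal (\<Sum>i<n. (f_nn m d a w (x i))\<^sup>2) \<partial>Ma m) = ennreal (\<Sum>i<n. \<Sum>r<m. (c w i r)\<^sup>2)"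
      unfolding eq using nn_integral_eq_integral[OF ii] iv by (simp add: sum_nonneg)
  qed
  also have "\<dots> \<le> (\<integral>\<^sup>+ w. ennreal (\<Sum>i<n. \<Sum>r<m. (inner_d d (w r) (x i))\<^sup>2 / real m) \<partial>Mw d m \<kappa>)"
  proof (intro nn_integral_mono ennreal_leI sum_mono)
    fix w :: "nat \<Rightarrow> nat \<Rightarrow> real" and i r :: nat
    have "(relu (inner_d d (w r) (x i)))\<^sup>2 \<le> (inner_d d (w r) (x i))\<^sup>2"
      by (auto simp: relu_def max_def power2_eq_square)
    thus "(c w i r)\<^sup>2 \<le> (inner_d d (w r) (x i))\<^sup>2 / real m"
      using m by (simp add: c_def power_divide divide_right_mono)
  qed
  also have "\<dots> = ennreal (\<Sum>i<n. \<Sum>r<m. \<kappa>\<^sup>2 * (\<Sum>j<d. (x i j)\<^sup>2) / real m)"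
  proof -
    have ci: "integrable (Mw d m \<kappa>) (\<lambda>w. (inner_d d (w r) (x i))\<^sup>2) \<and>
              integral\<^sup>L (Mw d m \<kappa>) (\<lambda>w. (inner_d d (w r) (x i))\<^sup>2) = \<kappa>\<^sup>2 * (\<Sum>j<d. (x i j)\<^sup>2)"
      if "r < m" for i r
      using comp_integral[OF k that inner_meas[where d=d and c="x i" and \<kappa>=\<kappa>]] gauss_inner[OF k, where d=d and c="x i"]
      by (simp add: inner_d_def)
    have ii: "integrable (Mw d m \<kappa>) (\<lambda>w. \<Sum>i<n. \<Sum>r<m. (inner_d d (w r) (x i))\<^sup>2 / real m)"
      using ci by (intro Bochner_Integration.integrable_sum integrable_divide_zero) auto
    have "integral\<^sup>L (Mw d m \<kappa>) (\<lambda>w. \<Sum>i<n. \<Sum>r<m. (inner_d d (w r) (x i))\<^sup>2 / real m)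
        = (\<Sum>i<n. \<Sum>r<m. \<kappa>\<^sup>2 * (\<Sum>j<d. (x i j)\<^sup>2) / real m)"
    proof -
      have e1: "integral\<^sup>L (Mw d m \<kappa>) (\<lambda>w. \<Sum>i<n. \<Sum>r<m. (inner_d d (w r) (x i))\<^sup>2 / real m)
          = (\<Sum>i<n. integral\<^sup>L (Mw d m \<kappa>) (\<lambda>w. \<Sum>r<m. (inner_d d (w r) (x i))\<^sup>2 / real m))"
        by (rule Bochner_Integration.integral_sum)
           (use ci in \<open>auto intro!: Bochner_Integration.integrable_sum integrable_divide_zero\<close>)
      have e2: "integral\<^sup>L (Mw d m \<kappa>) (\<lambda>w. \<Sum>r<m. (inner_d d (w r) (x i))\<^sup>2 / real m)
          = (\<Sum>r<m. integral\<^sup>L (Mw d m \<kappa>) (\<lambda>w. (inner_d d (w r) (x i))\<^sup>2 / real m))" for i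
        by (rule Bochner_Integration.integral_sum)
           (use ci in \<open>auto intro!: integrable_divide_zero\<close>)
      show ?thesis unfolding e1 e2 using ci by simp
    qed
    thus ?thesis using nn_integral_eq_integral[OF ii] by (simp add: sum_nonneg)
  qed
  also have "\<dots> = ennreal (real n * \<kappa>\<^sup>2)"
    using xn m by simp
  finally show ?thesis .
qed



lemma event_exists:
  fixes n m d :: nat and x :: "nat \<Rightarrow> nat \<Rightarrow> real" and \<kappa> \<delta> :: real
  assumes k: "\<kappa> > 0" "\<kappa> \<le> 1" and m: "m \<ge> 1" and n: "n \<ge> 1" and dl: "\<delta> > 0"
    and xn: "\<forall>i<n. (\<Sum>j<d. (x i j)\<^sup>2) = 1"
  shows "\<exists>E\<in>sets (init_measure d m \<kappa>). measure (init_measure d m \<kappa>) E \<ge> 1 - \<delta> \<and>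
     (\<forall>\<omega>\<in>E. (\<Sum>i<n. (f_nn m d (snd \<omega>) (fst \<omega>) (x i))\<^sup>2) < real n / \<delta> \<and> (\<forall>r\<in>{..<m}. \<bar>snd \<omega> r\<bar> \<le> 1))"
proof -
  interpret Pa: prob_space "Ma m" by (rule prob_PiM_const) (rule measure_pmf.prob_space_axioms)
  interpret Pw: prob_space "Mw d m \<kappa>" by (intro prob_PiM_const NN_prob k)
  interpret PP: pair_prob_space "Mw d m \<kappa>" "Ma m" ..
  let ?P = "Mw d m \<kappa> \<Otimes>\<^sub>M Ma m"
  define X where "X \<omega> = (\<Sum>i<n. (f_nn m d (snd \<omega>) (fst \<omega>) (x i))\<^sup>2)" for \<omega> :: "(nat \<Rightarrow> nat \<Rightarrow> real) \<times> (nat \<Rightarrow> real)"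
  have Xm[measurable]: "X \<in> borel_measurable ?P" unfolding X_def by (rule X_meas)
  have X0: "X \<omega> \<ge> 0" for \<omega> unfolding X_def by (simp add: sum_nonneg)
  define A where "A = {\<omega>\<in>space ?P. real n / \<delta> \<le> X \<omega>}"
  define B where "B = {\<omega>\<in>space ?P. \<not> (\<forall>r\<in>{..<m}. \<bar>snd \<omega> r\<bar> \<le> 1)}"
  have Asets: "A \<in> sets ?P" unfolding A_def by measurable
  have snd_meas[measurable]: "(\<lambda>\<omega>. snd \<omega> r) \<in> borel_measurable ?P" if "r \<in> {..<m}" for r
    using ms_meas[OF that] .
  have Bsets: "B \<in> sets ?P" unfolding B_def by measurable
  have "emeasure ?P {\<omega>\<in>space ?P. 1 \<le> ennreal (\<delta> / real n) * ennreal (X \<omega>)}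
        \<le> ennreal (\<delta> / real n) * (\<integral>\<^sup>+ \<omega>. ennreal (X \<omega>) * indicator (space ?P) \<omega> \<partial>?P)"
    by (rule nn_integral_Markov_inequality) auto
  also have "(\<integral>\<^sup>+ \<omega>. ennreal (X \<omega>) * indicator (space ?P) \<omega> \<partial>?P) = (\<integral>\<^sup>+ \<omega>. ennreal (X \<omega>) \<partial>?P)"
    by (intro nn_integral_cong) simp
  also have "\<dots> \<le> ennreal (real n * \<kappa>\<^sup>2)"
    unfolding X_def by (rule expect_bound[OF k(1) m xn])
  finally have "emeasure ?P {\<omega>\<in>space ?P. 1 \<le> ennreal (\<delta> / real n) * ennreal (X \<omega>)}
      \<le> ennreal (\<delta> / real n) * ennreal (real n * \<kappa>\<^sup>2)"
    by (simp add: mult_left_mono)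
  also have "\<dots> = ennreal (\<delta> * \<kappa>\<^sup>2)"
    using n dl by (simp add: ennreal_mult[symmetric])
  also have "\<dots> \<le> ennreal \<delta>"
    using k dl by (intro ennreal_leI) (simp add: mult_left_le power_le_one)
  finally have mA0: "emeasure ?P {\<omega>\<in>space ?P. 1 \<le> ennreal (\<delta> / real n) * ennreal (X \<omega>)} \<le> ennreal \<delta>" .
  have "{\<omega>\<in>space ?P. 1 \<le> ennreal (\<delta> / real n) * ennreal (X \<omega>)} = A"
  proof -
    have "1 \<le> ennreal (\<delta> / real n) * ennreal (X \<omega>) \<longleftrightarrow> real n / \<delta> \<le> X \<omega>" for \<omega>
    proof -
      have "ennreal (\<delta> / real n) * ennreal (X \<omega>) = ennreal (\<delta> / real n * X \<omega>)"
        using ennreal_mult''[OF X0[of \<omega>], of "\<delta> / real n"] by simp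
      moreover have "1 \<le> ennreal (\<delta> / real n * X \<omega>) \<longleftrightarrow> 1 \<le> \<delta> / real n * X \<omega>"
        using ennreal_le_iff[of "\<delta> / real n * X \<omega>" 1] dl X0 by simp
      moreover have "1 \<le> \<delta> / real n * X \<omega> \<longleftrightarrow> real n / \<delta> \<le> X \<omega>"
        using dl n by (simp add: field_simps)
      ultimately show ?thesis by simp
    qed
    thus ?thesis unfolding A_def by auto
  qed
  with mA0 have "emeasure ?P A \<le> ennreal \<delta>" by simp
  hence mA: "measure ?P A \<le> \<delta>"
    using PP.emeasure_eq_measure dl by simp
  have "AE \<omega> in ?P. \<forall>r\<in>{..<m}. \<bar>snd \<omega> r\<bar> \<le> 1"
  proof (rule PP.AE_pair_measure)
    show "{\<omega> \<in> space ?P. \<forall>r\<in>{..<m}. \<bar>snd \<omega> r\<bar> \<le> 1} \<in> sets ?P" by measurable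
    have "AE a in Ma m. \<forall>r\<in>{..<m}. \<bar>a r\<bar> \<le> 1"
    proof (rule AE_finite_allI)
      fix r assume r: "r \<in> {..<m}"
      have "AE t in measure_pmf (pmf_of_set {-1, 1::real}). \<bar>t\<bar> \<le> 1"
        by (simp add: AE_measure_pmf_iff)
      thus "AE a in Ma m. \<bar>a r\<bar> \<le> 1"
        by (rule AE_PiM_component[OF measure_pmf.prob_space_axioms r])
    qed simp
    thus "AE w in Mw d m \<kappa>. AE a in Ma m. \<forall>r\<in>{..<m}. \<bar>snd (w, a) r\<bar> \<le> 1" by simp
  qed
  hence "emeasure ?P B = 0"
    using AE_iff_measurable[OF Bsets] unfolding B_def by simp
  hence mB: "measure ?P B = 0" by (simp add: measure_def)
  define E where "E = space ?P - (A \<union> B)"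
  have Esets: "E \<in> sets ?P" unfolding E_def using Asets Bsets by auto
  have "measure ?P E = 1 - measure ?P (A \<union> B)"
    unfolding E_def using Asets Bsets by (intro PP.prob_compl) auto
  moreover have "measure ?P (A \<union> B) \<le> measure ?P A + measure ?P B"
    using Asets Bsets by (rule measure_Un_le)
  ultimately have "measure ?P E \<ge> 1 - \<delta>" using mA mB by simp
  moreover have "\<forall>\<omega>\<in>E. X \<omega> < real n / \<delta> \<and> (\<forall>r\<in>{..<m}. \<bar>snd \<omega> r\<bar> \<le> 1)"
    unfolding E_def A_def B_def by auto
  ultimately show ?thesis using Esets unfolding init_eq X_def by blast
qed



theorem lemma1:
  shows "\<exists>C>0. \<forall>(n::nat) (m::nat) (d::nat) (x::nat \<Rightarrow> nat \<Rightarrow> real) (y::nat \<Rightarrow> real)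
            (\<kappa>::real) (lam::real) (\<delta>::real).
     1 \<le> n \<longrightarrow> 1 \<le> m \<longrightarrow>
     (\<forall>i<n. norm_d d (x i) = 1 \<and> \<bar>y i\<bar> \<le> 1) \<longrightarrow>
     0 < \<kappa> \<longrightarrow> \<kappa> \<le> 1 \<longrightarrow> 0 < lam \<longrightarrow> 0 < \<delta> \<longrightarrow> \<delta> < 1 \<longrightarrow>
     (\<exists>E \<in> sets (init_measure d m \<kappa>).
        measure (init_measure d m \<kappa>) E \<ge> 1 - \<delta> \<and>
        (\<forall>\<omega>\<in>E. \<forall>W. grad_flow n m d x y (snd \<omega>) lam (fst \<omega>) W \<longrightarrow>
           (\<forall>t\<ge>0. \<forall>r<m. norm_d d (\<lambda>j. W t r j - fst \<omega> r j)
                        \<le> C * real n / (sqrt (\<delta> * real m) * lam))))"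
proof (intro exI[of _ "2::real"] conjI allI impI)
  show "(0::real) < 2" by simp
  fix n m d :: nat and x :: "nat \<Rightarrow> nat \<Rightarrow> real" and y :: "nat \<Rightarrow> real" and \<kappa> lam \<delta> :: real
  assume n: "1 \<le> n" and m: "1 \<le> m" and xy: "\<forall>i<n. norm_d d (x i) = 1 \<and> \<bar>y i\<bar> \<le> 1"
    and k0: "0 < \<kappa>" and k1: "\<kappa> \<le> 1" and lam: "0 < lam" and d0: "0 < \<delta>" and d1: "\<delta> < 1"
  have xn: "\<forall>i<n. (\<Sum>j<d. (x i j)\<^sup>2) = 1" using xy by (auto simp: norm_d_def)
  have xn': "\<forall>i<n. norm_d d (x i) = 1" using xy by auto
  obtain E where Es: "E \<in> sets (init_measure d m \<kappa>)" and Em: "measure (init_measure d m \<kappa>) E \<ge> 1 - \<delta>"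
    and EP: "\<forall>\<omega>\<in>E. (\<Sum>i<n. (f_nn m d (snd \<omega>) (fst \<omega>) (x i))\<^sup>2) < real n / \<delta> \<and> (\<forall>r\<in>{..<m}. \<bar>snd \<omega> r\<bar> \<le> 1)"
    using event_exists[OF k0 k1 m n d0 xn] by blast
  show "\<exists>E \<in> sets (init_measure d m \<kappa>).
        measure (init_measure d m \<kappa>) E \<ge> 1 - \<delta> \<and>
        (\<forall>\<omega>\<in>E. \<forall>W. grad_flow n m d x y (snd \<omega>) lam (fst \<omega>) W \<longrightarrow>
           (\<forall>t\<ge>0. \<forall>r<m. norm_d d (\<lambda>j. W t r j - fst \<omega> r j)
                        \<le> 2 * real n / (sqrt (\<delta> * real m) * lam)))"
  proof (intro bexI[of _ E] conjI ballI allI impI Em Es)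
    fix \<omega> :: "(nat \<Rightarrow> nat \<Rightarrow> real) \<times> (nat \<Rightarrow> real)" and W :: "real \<Rightarrow> nat \<Rightarrow> nat \<Rightarrow> real"
      and t :: real and r :: nat
    assume w: "\<omega> \<in> E" and gf: "grad_flow n m d x y (snd \<omega>) lam (fst \<omega>) W" and t: "t \<ge> 0" and r: "r < m"
    have ar: "\<forall>r<m. \<bar>snd \<omega> r\<bar> \<le> 1" using EP w by auto
    have Xl: "(\<Sum>i<n. (f_nn m d (snd \<omega>) (fst \<omega>) (x i))\<^sup>2) < real n / \<delta>" using EP w by auto
    have "(\<Sum>i<n. (f_nn m d (snd \<omega>) (fst \<omega>) (x i) - y i)\<^sup>2)
        \<le> (\<Sum>i<n. 2 * (f_nn m d (snd \<omega>) (fst \<omega>) (x i))\<^sup>2 + 2)"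
    proof (rule sum_mono)
      fix i assume "i \<in> {..<n}"
      hence yi: "(y i)\<^sup>2 \<le> 1" using xy by (simp add: abs_square_le_1)
      have "(f_nn m d (snd \<omega>) (fst \<omega>) (x i) - y i)\<^sup>2 \<le> 2 * (f_nn m d (snd \<omega>) (fst \<omega>) (x i))\<^sup>2 + 2 * (y i)\<^sup>2"
      proof -
        have "0 \<le> (f_nn m d (snd \<omega>) (fst \<omega>) (x i) + y i)\<^sup>2" by simp
        thus ?thesis unfolding power2_diff power2_sum by linarith
      qed
      thus "(f_nn m d (snd \<omega>) (fst \<omega>) (x i) - y i)\<^sup>2 \<le> 2 * (f_nn m d (snd \<omega>) (fst \<omega>) (x i))\<^sup>2 + 2"
        using yi by simp
    qed
    also have "\<dots> = 2 * (\<Sum>i<n. (f_nn m d (snd \<omega>) (fst \<omega>) (x i))\<^sup>2) + 2 * real n"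
      by (simp add: sum.distrib sum_distrib_left)
    also have "\<dots> \<le> 2 * (real n / \<delta>) + 2 * (real n / \<delta>)"
    proof -
      have "\<delta> * real n \<le> 1 * real n" using d1 by (intro mult_right_mono) auto
      hence "real n \<le> real n / \<delta>" using d0 by (simp add: field_simps)
      thus ?thesis using Xl by simp
    qed
    also have "\<dots> = 4 * real n / \<delta>" by simp
    finally have B: "(\<Sum>i<n. (f_nn m d (snd \<omega>) (fst \<omega>) (x i) - y i)\<^sup>2) \<le> 4 * real n / \<delta>" .
    have "norm_d d (\<lambda>j. W t r j - fst \<omega> r j) \<le> sqrt (real n) * sqrt (4 * real n / \<delta>) / (sqrt (real m) * lam)"
      by (rule final_bound[OF gf lam ar xn' B t r])
    also have "sqrt (real n) * sqrt (4 * real n / \<delta>) = 2 * real n / sqrt \<delta>"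
    proof -
      have "sqrt (4 * real n / \<delta>) = 2 * sqrt (real n) / sqrt \<delta>"
        by (simp add: real_sqrt_divide real_sqrt_mult)
      thus ?thesis by simp
    qed
    also have "2 * real n / sqrt \<delta> / (sqrt (real m) * lam) = 2 * real n / (sqrt (\<delta> * real m) * lam)"
      by (simp add: real_sqrt_mult)
    finally show "norm_d d (\<lambda>j. W t r j - fst \<omega> r j) \<le> 2 * real n / (sqrt (\<delta> * real m) * lam)" .
  qed
qed

end
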